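(* For all finite strings $s,s'$ over the alphabet $\{\blacktriangledown,\blacktriangle,\triangleleft,\triangleright\}$, if $s$ is a subword of $s'$, then $b(s)\le b(s')$.
   Context: Consider finite strings over the alphabet $\{\blacktriangledown,\blacktriangle,\triangleleft,\triangleright\}$. The allowed replacements (each replaces a contiguous substring equal to its left-hand side by its right-hand side) are: $\triangleleft\blacktriangle\to\triangleleft$, $\triangleleft\blacktriangledown\to\triangleleft$, $\blacktriangle\triangleright\to\triangleright$, $\blacktriangledown\triangleright\to\triangleright$, $\blacktriangle\blacktriangle\to\blacktriangle$, $\blacktriangledown\blacktriangledown\to\blacktriangledown$, $\blacktriangledown\blacktriangle\to\blacktriangle\blacktriangledown$, $\blacktriangle\blacktriangledown\to\blacktriangledown\blacktriangle$, and $\triangleleft\triangleright\to\emptyset$ (the empty string). A rewriting $s\Rightarrow t$ is the simultaneous application to $s$ of several allowed replacements whose left-hand sides occupy pairwise disjoint contiguous substrings of $s$, producing $t$. A rewriting sequence of length $\ell$ from $s$ is a sequence $s=s_0\Rightarrow s_1\Rightarrow\cdots\Rightarrow s_\ell=\emptyset$. $b(s)$ denotes the length of a shortest rewriting sequence from $s$ (taken as $+\infty$ if none exists). A string $s$ is a subword of $s'$ if $s$ can be obtained from $s'$ by deleting some occurrences of the symbols $\blacktriangledown,\blacktriangle$ without changing the order of the remaining symbols. *)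

theory Defs
  imports Main "HOL-Library.Extended_Nat"
begin

text \<open>Alphabet: Down = black down-triangle, Up = black up-triangle,
  Lt = left-pointing triangle, Rt = right-pointing triangle.\<close>
datatype sym = Down | Up | Lt | Rt

inductive rule :: "sym list \<Rightarrow> sym list \<Rightarrow> bool" where
  "rule [Lt, Up] [Lt]"
| "rule [Lt, Down] [Lt]"
| "rule [Up, Rt] [Rt]"
| "rule [Down, Rt] [Rt]"
| "rule [Up, Up] [Up]"
| "rule [Down, Down] [Down]"
| "rule [Down, Up] [Up, Down]"
| "rule [Up, Down] [Down, Up]"
| "rule [Lt, Rt] []"

text \<open>One rewriting: simultaneous application of replacements at pairwise
  disjoint positions (s is split into segments, each either an untouched
  symbol or a left-hand side which is replaced by its right-hand side).\<close>
inductive rewrite :: "sym list \<Rightarrow> sym list \<Rightarrow> bool" where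
  rw_nil: "rewrite [] []"
| rw_keep: "rewrite s t \<Longrightarrow> rewrite (a # s) (a # t)"
| rw_rule: "rule l r \<Longrightarrow> rewrite s t \<Longrightarrow> rewrite (l @ s) (r @ t)"

definition b :: "sym list \<Rightarrow> enat" where
  "b s = (if \<exists>n. (rewrite ^^ n) s [] then enat (LEAST n. (rewrite ^^ n) s []) else \<infinity>)"

inductive subword :: "sym list \<Rightarrow> sym list \<Rightarrow> bool" where
  sw_nil: "subword [] []"
| sw_keep: "subword s s' \<Longrightarrow> subword (a # s) (a # s')"
| sw_del: "a \<in> {Up, Down} \<Longrightarrow> subword s s' \<Longrightarrow> subword s (a # s')"

end

theory Submission imports Defs begin
lemma rewrite_refl: "rewrite s s"
  by (induction s) (auto intro: rewrite.intros)

lemma rewrite_app: "rewrite u v \<Longrightarrow> rewrite s t \<Longrightarrow> rewrite (u @ s) (v @ t)"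
proof (induction rule: rewrite.induct)
  case rw_nil then show ?case by simp
next
  case (rw_keep s1 t1 a) then show ?case by (simp add: rewrite.rw_keep)
next
  case (rw_rule l r s1 t1) then show ?case using rewrite.rw_rule by fastforce
qed

lemma rule_rewrite: "rule l r \<Longrightarrow> rewrite l r"
  using rw_rule[OF _ rw_nil] by fastforce

lemma subword_refl: "subword s s"
  by (induction s) (auto intro: subword.intros)

lemma subword_app: "subword a e \<Longrightarrow> subword c d \<Longrightarrow> subword (a @ c) (e @ d)"
  by (induction rule: subword.induct) (auto intro: subword.intros)

lemma subword_nil: "subword s [] \<Longrightarrow> s = []"
  by (cases rule: subword.cases) auto

lemma subword_split: "subword s (xs @ ys) \<Longrightarrow> \<exists>u v. s = u @ v \<and> subword u xs \<and> subword v ys"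
proof (induction xs arbitrary: s)
  case Nil
  then have "s = [] @ s \<and> subword [] [] \<and> subword s ys" by (simp add: subword.sw_nil)
  then show ?case by (rule exI[of _ "[]", OF exI[of _ s]])
next
  case (Cons x xs)
  from Cons.prems show ?case
  proof (cases rule: subword.cases)
    case sw_nil then show ?thesis by simp
  next
    case (sw_keep s1 s2 a)
    then have h: "subword s1 (xs @ ys)" "a = x" by auto
    obtain u v where uv: "s1 = u @ v" "subword u xs" "subword v ys" using Cons.IH[OF h(1)] by blast
    have "s = (x # u) @ v" using sw_keep uv h(2) by simp
    moreover have "subword (x # u) (x # xs)" using uv by (rule_tac subword.sw_keep)
    ultimately show ?thesis using uv(3) by (intro exI[of _ "x # u"] exI[of _ v] conjI)
  next
    case (sw_del a s2)
    then have h: "subword s (xs @ ys)" "a = x" by auto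
    obtain u v where uv: "s = u @ v" "subword u xs" "subword v ys" using Cons.IH[OF h(1)] by blast
    have "subword u (x # xs)" using sw_del uv h(2) by (simp add: subword.sw_del)
    then show ?thesis using uv by (intro exI[of _ u] exI[of _ v] conjI)
  qed
qed

lemma subword_Cons_cases:
  "subword u (x # xs) \<Longrightarrow> (\<exists>u'. u = x # u' \<and> subword u' xs) \<or> (x \<in> {Up, Down} \<and> subword u xs)"
  by (cases rule: subword.cases) auto

lemma subword_one: "subword w [y] \<Longrightarrow> w = [y] \<or> (y \<in> {Up, Down} \<and> w = [])"
proof -
  assume "subword w [y]"
  then have "(\<exists>u'. w = y # u' \<and> subword u' []) \<or> (y \<in> {Up, Down} \<and> subword w [])"
    by (rule subword_Cons_cases)
  then show ?thesis using subword_nil by auto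
qed

lemma subword_two: "subword u [x, y] \<Longrightarrow>
   u = [x, y] \<or> (x \<in> {Up, Down} \<and> u = [y]) \<or> (y \<in> {Up, Down} \<and> u = [x])
   \<or> (x \<in> {Up, Down} \<and> y \<in> {Up, Down} \<and> u = [])"
proof -
  assume "subword u [x, y]"
  then have "(\<exists>u'. u = x # u' \<and> subword u' [y]) \<or> (x \<in> {Up, Down} \<and> subword u [y])"
    by (rule subword_Cons_cases)
  then show ?thesis
  proof (elim disjE exE conjE)
    fix u' assume "u = x # u'" "subword u' [y]"
    then show ?thesis using subword_one[of u' y] by auto
  next
    assume "x \<in> {Up, Down}" "subword u [y]"
    then show ?thesis using subword_one[of u y] by auto
  qed
qed

lemma ex1: "rewrite u v \<Longrightarrow> subword v r \<Longrightarrow> \<exists>v. rewrite u v \<and> subword v r" by blast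

lemma sw1: "a \<in> {Up,Down} \<Longrightarrow> subword [] [a]" by (simp add: subword.intros)
lemma sw2: "subword [a] [a, c] \<longleftrightarrow> c \<in> {Up,Down}"
  using subword_Cons_cases subword_nil subword.intros by (metis list.inject list.distinct(1))
lemma sw3: "subword [c] [a, c]" if "a \<in> {Up,Down}" using that by (simp add: subword.intros subword_refl)

lemma sw4: "subword [] [a, c]" if "a \<in> {Up,Down}" "c \<in> {Up,Down}"
  using that by (simp add: subword.intros)

lemma rule_sim: "rule l r \<Longrightarrow> subword u l \<Longrightarrow> \<exists>v. rewrite u v \<and> subword v r"
  apply (induction rule: rule.induct; drule subword_two; elim disjE conjE; simp)
  apply ((rule ex1[OF rule_rewrite subword_refl], rule rule.intros)
     | (rule ex1[OF rewrite_refl], simp add: subword_refl sw1 sw2 sw3 sw4 subword.sw_nil))+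
  done

lemma sim: "rewrite s' t' \<Longrightarrow> subword s s' \<Longrightarrow> \<exists>t. rewrite s t \<and> subword t t'"
proof (induction arbitrary: s rule: rewrite.induct)
  case rw_nil
  then have "s = []" by (rule subword_nil)
  then show ?case using rewrite.rw_nil subword.sw_nil by blast
next
  case (rw_keep s1 t1 a)
  from rw_keep.prems show ?case
  proof (cases rule: subword.cases)
    case sw_keep
    then obtain s0 where h: "subword s0 s1" "s = a # s0" by auto
    obtain t where t: "rewrite s0 t" "subword t t1" using rw_keep.IH[OF h(1)] by blast
    have "rewrite s (a # t)" using h(2) t(1) by (simp add: rewrite.rw_keep)
    moreover have "subword (a # t) (a # t1)" using t(2) by (rule subword.sw_keep)
    ultimately show ?thesis by (rule ex1)
  next
    case sw_del
    then have h: "subword s s1" "a \<in> {Up, Down}" by auto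
    obtain t where t: "rewrite s t" "subword t t1" using rw_keep.IH[OF h(1)] by blast
    have "subword t (a # t1)" using h(2) t(2) by (rule subword.sw_del)
    then show ?thesis using t(1) ex1 by blast
  qed
next
  case (rw_rule l r s1 t1)
  obtain u v where uv: "s = u @ v" "subword u l" "subword v s1"
    using subword_split[OF rw_rule.prems] by blast
  obtain w where w: "rewrite u w" "subword w r" using rule_sim[OF rw_rule.hyps(1) uv(2)] by blast
  obtain t where t: "rewrite v t" "subword t t1" using rw_rule.IH[OF uv(3)] by blast
  have "rewrite s (w @ t)" using uv(1) w(1) t(1) rewrite_app by simp
  moreover have "subword (w @ t) (r @ t1)" using w(2) t(2) by (rule subword_app)
  ultimately show ?case by (rule ex1)
qed

lemma pow_sim: "(rewrite ^^ n) s' [] \<Longrightarrow> subword s s' \<Longrightarrow> (rewrite ^^ n) s []"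
proof (induction n arbitrary: s s')
  case 0
  then have "s' = []" by simp
  then have "s = []" using 0(2) subword_nil by simp
  then show ?case by simp
next
  case (Suc n)
  obtain t' where t': "rewrite s' t'" "(rewrite ^^ n) t' []"
    using relpowp_Suc_D2[OF Suc.prems(1)] by blast
  obtain t where t: "rewrite s t" "subword t t'" using sim[OF t'(1) Suc.prems(2)] by blast
  have "(rewrite ^^ n) t []" using Suc.IH[OF t'(2) t(2)] .
  then show ?case using t(1) by (rule relpowp_Suc_I2[rotated])
qed

theorem theorem4:
  fixes s s' :: "sym list"
  assumes "subword s s'"
  shows "b s \<le> b s'"
proof (cases "\<exists>n. (rewrite ^^ n) s' []")
  case False
  then show ?thesis unfolding b_def by simp
next
  case True
  define n where "n = (LEAST n. (rewrite ^^ n) s' [])"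
  have "(rewrite ^^ n) s' []" unfolding n_def using True by (rule LeastI_ex)
  then have h: "(rewrite ^^ n) s []" using assms by (rule pow_sim)
  then have "(LEAST n. (rewrite ^^ n) s []) \<le> n" by (rule Least_le)
  moreover have "\<exists>m. (rewrite ^^ m) s []" using h by blast
  ultimately show ?thesis unfolding b_def n_def using True by simp
qed

end
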